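(* Let $S$ be a set of $n$ points in $\mathbb{R}^k$ under an $L_p$ metric $d$ ($1\le p<\infty$). Consider the following level-by-level construction: set $S_1=S$; given a nonempty $S_i$, choose a pivot $p_i$ uniformly at random from $S_i$ (independently of previous levels), let $d_i=d(p_i,S_i)$, form the axis-aligned grid $G_i$ with boxes of side length $d_i/(6k)$, let $S_i'$ be the set of points $x\in S_i$ such that no other point of $S_i$ lies in the $3^k$ boxes of $G_i$ consisting of the box containing $x$ and its bordering boxes, set $S_{i+1}=S_i\setminus S_i'$, and recurse on $S_{i+1}$ if it is nonempty. Then with high probability the construction makes $O(\log n)$ recursive calls, i.e., the resulting sparse partition has $O(\log n)$ levels.
   Context: $d(x,T)=\min\{d(x,y):y\in T\setminus\{x\}\}$. A bound holds with high probability on input size $n$ if it holds with probability at least $1-1/n^c$ for some constant $c>0$. *)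

theory Defs
  imports "HOL-Analysis.Analysis" "HOL-Probability.Probability"
begin

text \<open>Points of R^k are modelled as vectors of type real^'k, with k = CARD('k).\<close>

definition lp_dist :: "real \<Rightarrow> real^'k \<Rightarrow> real^'k \<Rightarrow> real" where
  "lp_dist p x y = (\<Sum>i\<in>UNIV. \<bar>x$i - y$i\<bar> powr p) powr (1 / p)"

text \<open>d(x,T) = min over T minus x of the distance to x (used only when T has another point).\<close>
definition set_dist :: "real \<Rightarrow> real^'k \<Rightarrow> (real^'k) set \<Rightarrow> real" where
  "set_dist p x T = Min ((\<lambda>y. lp_dist p x y) ` (T - {x}))"

definition grid_box :: "real \<Rightarrow> real^'k \<Rightarrow> ('k \<Rightarrow> int)" where
  "grid_box s x = (\<lambda>i. \<lfloor>x$i / s\<rfloor>)"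

definition grid_isolated :: "real \<Rightarrow> (real^'k) set \<Rightarrow> real^'k \<Rightarrow> bool" where
  "grid_isolated s T x \<longleftrightarrow>
     \<not> (\<exists>y\<in>T. y \<noteq> x \<and> (\<forall>i. \<bar>grid_box s y i - grid_box s x i\<bar> \<le> 1))"

text \<open>One level: given S_i and pivot q, compute S_{i+1} = S_i - S_i'.
  For a singleton S_i (d_i undefined) the single point is isolated in every grid,
  so S_{i+1} is empty.\<close>
definition next_level :: "real \<Rightarrow> (real^'k) set \<Rightarrow> real^'k \<Rightarrow> (real^'k) set" where
  "next_level p S q =
     (if card S \<le> 1 then {}
      else (let d = set_dist p q S; s = d / (6 * real CARD('k))
            in S - {x\<in>S. grid_isolated s S x}))"

primrec levels_fuel :: "nat \<Rightarrow> real \<Rightarrow> (real^'k) set \<Rightarrow> nat pmf" where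
  "levels_fuel 0 p S = return_pmf 0"
| "levels_fuel (Suc m) p S =
     (if S = {} then return_pmf 0
      else bind_pmf (pmf_of_set S) (\<lambda>q. map_pmf Suc (levels_fuel m p (next_level p S q))))"

text \<open>Each level removes at least the pivot, so card S levels of fuel suffice and this is
  exactly the number of levels of the construction started at S_1 = S.\<close>
definition num_levels :: "real \<Rightarrow> (real^'k) set \<Rightarrow> nat pmf" where
  "num_levels p S = levels_fuel (card S) p S"

end

theory Submission
  imports Defs
begin

lemma bind_set_prob:
  assumes "finite S" "S \<noteq> {}"
  shows "measure_pmf.prob (bind_pmf (pmf_of_set S) N) X = (\<Sum>x\<in>S. measure_pmf.prob (N x) X) / card S"
proof -
  have "emeasure (measure_pmf (bind_pmf (pmf_of_set S) N)) X = (\<integral>\<^sup>+x. emeasure (N x) X \<partial>pmf_of_set S)"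
    by simp
  also have "\<dots> = (\<Sum>x\<in>S. emeasure (N x) X) / card S"
    using assms by (simp add: nn_integral_pmf_of_set)
  also have "\<dots> = ennreal ((\<Sum>x\<in>S. measure_pmf.prob (N x) X) / card S)"
    using assms by (simp add: measure_pmf.emeasure_eq_measure sum_ennreal ennreal_of_nat_eq_real_of_nat divide_ennreal sum_nonneg card_gt_0_iff)
  finally show ?thesis by (simp add: measure_pmf.emeasure_eq_measure ennreal_inj sum_nonneg)
qed

lemma lp_pos:
  fixes x y :: "real^'k"
  assumes "1 \<le> p" "x \<noteq> y"
  shows "lp_dist p x y > 0"
proof -
  obtain i where i: "x$i \<noteq> y$i" using assms(2) by (auto simp: vec_eq_iff)
  have "0 < (\<Sum>i\<in>UNIV. \<bar>x$i - y$i\<bar> powr p)"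
    by (rule sum_pos2[of UNIV i]) (use i in auto)
  then show ?thesis unfolding lp_dist_def by simp
qed

lemma lp_small:
  fixes x y :: "real^'k"
  assumes "1 \<le> p" "t \<ge> 0" "\<And>i. \<bar>x$i - y$i\<bar> \<le> t"
  shows "lp_dist p x y \<le> real CARD('k) * t"
proof -
  let ?K = "real CARD('k)"
  have K1: "?K \<ge> 1" by simp
  have "(\<Sum>i\<in>UNIV. \<bar>x$i - y$i\<bar> powr p) \<le> (\<Sum>i\<in>(UNIV::'k set). t powr p)"
    by (rule sum_mono) (use assms in \<open>auto intro: powr_mono2\<close>)
  also have "\<dots> = ?K * t powr p" by simp
  finally have le: "(\<Sum>i\<in>UNIV. \<bar>x$i - y$i\<bar> powr p) \<le> ?K * t powr p" .
  have "lp_dist p x y \<le> (?K * t powr p) powr (1/p)"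
    unfolding lp_dist_def using assms(1) le by (auto intro!: powr_mono2 sum_nonneg)
  also have "\<dots> = ?K powr (1/p) * t"
    using assms by (simp add: powr_mult powr_powr)
  also have "\<dots> \<le> ?K * t"
  proof -
    have "?K powr (1/p) \<le> ?K powr 1" using K1 assms(1) by (intro powr_mono) auto
    then show ?thesis using assms(2) by (simp add: mult_right_mono)
  qed
  finally show ?thesis .
qed

lemma floor_close:
  fixes a b s :: real
  assumes "s > 0" "\<bar>\<lfloor>a / s\<rfloor> - \<lfloor>b / s\<rfloor>\<bar> \<le> 1"
  shows "\<bar>a - b\<bar> \<le> 2 * s"
proof -
  have "\<bar>a/s - b/s\<bar> \<le> 2"
    using assms(2) floor_le_iff le_floor_iff floor_correct[of "a/s"] floor_correct[of "b/s"]
    by linarith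
  then have "\<bar>a - b\<bar> / s \<le> 2" using assms(1) by (simp add: diff_divide_distrib[symmetric])
  then show ?thesis using assms(1) by (simp add: divide_le_eq)
qed

lemma set_dist_le:
  assumes "finite S" "y \<in> S" "y \<noteq> x"
  shows "set_dist p x S \<le> lp_dist p x y"
  unfolding set_dist_def using assms by (intro Min_le) auto

lemma set_dist_pos:
  fixes S :: "(real^'k) set"
  assumes "1 \<le> p" "finite S" "card S \<ge> 2" "q \<in> S"
  shows "set_dist p q S > 0"
proof -
  have "S - {q} \<noteq> {}"
  proof
    assume "S - {q} = {}"
    then have "S \<subseteq> {q}" by auto
    then have "card S \<le> 1" using card_mono[of "{q}" S] by simp
    then show False using assms(3) by simp
  qed
  then show ?thesis unfolding set_dist_def using assms
    by (subst Min_gr_iff) (auto intro: lp_pos)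
qed

lemma isolated:
  fixes S :: "(real^'k) set"
  assumes "1 \<le> p" "finite S" "card S \<ge> 2" "q \<in> S" "x \<in> S"
    "set_dist p x S \<ge> set_dist p q S"
  shows "grid_isolated (set_dist p q S / (6 * real CARD('k))) S x"
proof -
  define d where "d = set_dist p q S"
  define s where "s = d / (6 * real CARD('k))"
  have d0: "d > 0" unfolding d_def using set_dist_pos assms by blast
  have s0: "s > 0" unfolding s_def using d0 by simp
  show ?thesis unfolding grid_isolated_def s_def[symmetric] d_def[symmetric]
  proof
    assume "\<exists>y\<in>S. y \<noteq> x \<and> (\<forall>i. \<bar>grid_box s y i - grid_box s x i\<bar> \<le> 1)"
    then obtain y where y: "y \<in> S" "y \<noteq> x" "\<And>i. \<bar>grid_box s y i - grid_box s x i\<bar> \<le> 1" by blast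
    have "\<And>i. \<bar>x$i - y$i\<bar> \<le> 2 * s"
    proof -
      fix i
      have "\<bar>y$i - x$i\<bar> \<le> 2 * s"
        using floor_close[OF s0, of "y$i" "x$i"] y(3)[of i] by (simp add: grid_box_def)
      then show "\<bar>x$i - y$i\<bar> \<le> 2 * s" by simp
    qed
    then have "lp_dist p x y \<le> real CARD('k) * (2 * s)"
      using lp_small[OF assms(1), of "2 * s" x y] s0 by simp
    also have "\<dots> = d / 3" unfolding s_def by simp
    finally have "lp_dist p x y \<le> d / 3" .
    moreover have "set_dist p x S \<le> lp_dist p x y" using set_dist_le assms(2) y by metis
    ultimately show False using assms(6) d0 unfolding d_def by linarith
  qed
qed

lemma next_sub:
  fixes S :: "(real^'k) set"
  assumes "1 \<le> p" "finite S" "q \<in> S"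
  shows "next_level p S q \<subseteq> {x\<in>S. set_dist p x S < set_dist p q S}"
proof (cases "card S \<le> 1")
  case True then show ?thesis by (simp add: next_level_def)
next
  case False
  then have c2: "card S \<ge> 2" by simp
  show ?thesis
  proof
    fix x assume "x \<in> next_level p S q"
    then have x: "x \<in> S" "\<not> grid_isolated (set_dist p q S / (6 * real CARD('k))) S x"
      using False by (auto simp: next_level_def Let_def)
    then show "x \<in> {x\<in>S. set_dist p x S < set_dist p q S}"
      using isolated[OF assms(1,2) c2 assms(3)] by force
  qed
qed

lemma pair_count:
  fixes g :: "'a \<Rightarrow> real"
  assumes "finite S"
  shows "real (\<Sum>q\<in>S. card {x\<in>S. g x < g q}) \<le> real (card S)^2 / 2"
proof -
  define P where "P = Sigma S (\<lambda>q. {x\<in>S. g x < g q})"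
  have fP: "finite P" unfolding P_def using assms by auto
  have cP: "card P = (\<Sum>q\<in>S. card {x\<in>S. g x < g q})"
    unfolding P_def using assms by (subst card_SigmaI) auto
  define Q where "Q = prod.swap ` P"
  have cQ: "card Q = card P" unfolding Q_def by (rule card_image) simp
  have disj: "P \<inter> Q = {}" unfolding P_def Q_def by auto
  have sub: "P \<union> Q \<subseteq> S \<times> S" unfolding P_def Q_def by auto
  have "card P + card Q = card (P \<union> Q)"
    using disj fP by (subst card_Un_disjoint) (auto simp: Q_def)
  also have "\<dots> \<le> card (S \<times> S)" using sub assms by (intro card_mono) auto
  also have "\<dots> = card S ^ 2" by (simp add: card_cartesian_product power2_eq_square)
  finally have "2 * card P \<le> card S ^ 2" using cQ by simp
  then have "2 * real (card P) \<le> real (card S) ^ 2" by (metis of_nat_le_iff of_nat_mult of_nat_numeral of_nat_power)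
  then show ?thesis using cP by simp
qed

lemma sum_next:
  fixes S :: "(real^'k) set"
  assumes "1 \<le> p" "finite S"
  shows "(\<Sum>q\<in>S. real (card (next_level p S q))) \<le> real (card S)^2 / 2"
proof -
  have "(\<Sum>q\<in>S. real (card (next_level p S q))) \<le>
        (\<Sum>q\<in>S. real (card {x\<in>S. set_dist p x S < set_dist p q S}))"
    by (intro sum_mono of_nat_mono card_mono) (use assms next_sub in auto)
  also have "\<dots> \<le> real (card S)^2 / 2"
    using pair_count[OF assms(2), of "\<lambda>x. set_dist p x S"] by simp
  finally show ?thesis .
qed

lemma main_bound:
  fixes S :: "(real^'k) set"
  assumes "1 \<le> p" "finite S"
  shows "measure_pmf.prob (levels_fuel f p S) {l. l > m} \<le> real (card S) * (1/2)^m"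
  using assms(2)
proof (induction f arbitrary: S m)
  case 0
  then show ?case by simp
next
  case (Suc f)
  show ?case
  proof (cases "S = {}")
    case True then show ?thesis by simp
  next
    case ne: False
    have n1: "real (card S) \<ge> 1" using ne Suc.prems by (simp add: Suc_leI card_gt_0_iff)
    let ?N = "\<lambda>q. map_pmf Suc (levels_fuel f p (next_level p S q))"
    have eq: "measure_pmf.prob (levels_fuel (Suc f) p S) {l. l > m} =
          (\<Sum>q\<in>S. measure_pmf.prob (?N q) {l. l > m}) / card S"
      using ne Suc.prems by (simp add: bind_set_prob)
    show ?thesis
    proof (cases m)
      case 0
      have "(\<Sum>q\<in>S. measure_pmf.prob (?N q) {l. l > m}) \<le> (\<Sum>q\<in>S. 1)"
        by (intro sum_mono) auto
      then have "(\<Sum>q\<in>S. measure_pmf.prob (?N q) {l. l > m}) / card S \<le> 1"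
        using n1 by (simp add: divide_le_eq)
      then show ?thesis using eq n1 0 by simp
    next
      case (Suc m')
      have fin: "\<And>q. finite (next_level p S q)"
        using Suc.prems by (rule finite_subset[rotated]) (auto simp: next_level_def Let_def)
      have "(\<Sum>q\<in>S. measure_pmf.prob (?N q) {l. l > m}) =
            (\<Sum>q\<in>S. measure_pmf.prob (levels_fuel f p (next_level p S q)) {l. l > m'})"
        using Suc by (intro sum.cong) (auto simp: vimage_def)
      also have "\<dots> \<le> (\<Sum>q\<in>S. real (card (next_level p S q)) * (1/2)^m')"
        by (intro sum_mono Suc.IH fin)
      also have "\<dots> = (\<Sum>q\<in>S. real (card (next_level p S q))) * (1/2)^m'"
        by (simp add: sum_distrib_right)
      also have "\<dots> \<le> real (card S)^2 / 2 * (1/2)^m'"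
        by (intro mult_right_mono sum_next assms(1) Suc.prems) simp
      finally have X: "(\<Sum>q\<in>S. measure_pmf.prob (?N q) {l. l > m})
          \<le> real (card S)^2 / 2 * (1/2)^m'" .
      have "(\<Sum>q\<in>S. measure_pmf.prob (?N q) {l. l > m}) / card S
          \<le> real (card S)^2 / 2 * (1/2)^m' / card S"
        by (rule divide_right_mono[OF X]) simp
      also have "\<dots> = real (card S) * (1/2)^m"
        using n1 Suc by (simp add: power2_eq_square)
      finally show ?thesis using eq by simp
    qed
  qed
qed

theorem lemma4p1:
  fixes p :: real
  assumes "1 \<le> p"
  shows "\<exists>C c n0. C > 0 \<and> c > 0 \<and>
           (\<forall>S :: (real^'k) set. finite S \<and> card S \<ge> n0 \<longrightarrow>
              measure_pmf.prob (num_levels p S) {l. real l > C * ln (real (card S))}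
                \<le> 1 / real (card S) powr c)"
proof (intro exI conjI allI impI)
  define C :: real where "C = 3 / ln 2"
  show "C > 0" unfolding C_def by simp
  show "(1::real) > 0" by simp
  fix S :: "(real^'k) set"
  assume a: "finite S \<and> 2 \<le> card S"
  define n where "n = real (card S)"
  have n2: "n \<ge> 2" using a unfolding n_def by simp
  define m where "m = nat \<lfloor>C * ln n\<rfloor>"
  have Cl: "C * ln n \<ge> 0" unfolding C_def using n2 by simp
  have sub: "{l. real l > C * ln n} \<subseteq> {l. l > m}"
  proof
    fix l assume "l \<in> {l. real l > C * ln n}"
    then have "real l > C * ln n" by simp
    then have "int l > \<lfloor>C * ln n\<rfloor>" by linarith
    then show "l \<in> {l. l > m}" unfolding m_def using Cl by (auto simp: nat_less_iff)
  qed
  have "measure_pmf.prob (num_levels p S) {l. real l > C * ln n}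
        \<le> measure_pmf.prob (num_levels p S) {l. l > m}"
    by (rule measure_pmf.finite_measure_mono[OF sub]) simp
  also have "\<dots> \<le> n * (1/2)^m"
    unfolding num_levels_def n_def using main_bound assms a by blast
  also have "(1/2::real)^m \<le> 2 / n^3"
  proof -
    have mr: "real m \<ge> C * ln n - 1" unfolding m_def using Cl by linarith
    have "(1/2::real)^m = exp (- real m * ln 2)"
      by (simp add: exp_minus exp_of_nat_mult power_one_over inverse_eq_divide)
    also have "\<dots> \<le> exp (- (C * ln n - 1) * ln 2)"
    proof -
      have "(C * ln n - 1) * ln 2 \<le> real m * ln 2" using mr by (intro mult_right_mono) auto
      then show ?thesis by (simp add: algebra_simps)
    qed
    also have "- (C * ln n - 1) * ln 2 = ln 2 - 3 * ln n"
      unfolding C_def by (simp add: algebra_simps)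
    also have "exp (ln 2 - 3 * ln n) = 2 / n^3"
    proof -
      have "exp (3 * ln n) = n^3" using exp_of_nat_mult[of 3 "ln n"] n2 by simp
      then show ?thesis by (simp add: exp_diff)
    qed
    finally show ?thesis .
  qed
  then have "n * (1/2)^m \<le> n * (2 / n^3)" using n2 by (intro mult_left_mono) auto
  also have "\<dots> \<le> 1 / n"
  proof -
    have "n * (2 / n^3) = 2 / n^2" using n2 by (simp add: power2_eq_square power3_eq_cube)
    also have "\<dots> \<le> 1 / n" using n2 by (simp add: divide_simps power2_eq_square)
    finally show ?thesis .
  qed
  finally show "measure_pmf.prob (num_levels p S) {l. real l > C * ln (real (card S))}
                \<le> 1 / real (card S) powr 1" unfolding n_def using n2 n_def by simp
qed

end
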